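(* If $f:\{0,1\}^n\to\{0,1\}^n$ is computable by polynomial-size circuits, length-preserving, and one-to-one on $\{0,1\}^n$ for infinitely many $n$, then $f$ does not have a super-core.
   Context: A predicate $b$ computable by polynomial-size circuits is a super-core of $f:\{0,1\}^n\to\{0,1\}^{m(n)}$ if there do not exist a nondeterministic polynomial-size circuit family $\mathcal{A}_1$ (accepting iff some witness gives output 1), a co-nondeterministic polynomial-size circuit family $\mathcal{A}_2$ (rejecting iff some witness gives output 0), a polynomial $p$ and infinitely many $n$ such that either $\Pr_{x\in\{0,1\}^n}[\mathcal{A}_1(f(x),1^n)=b(x)=0]+\tfrac12\Pr_{y\in\{0,1\}^{m(n)}}[\mathcal{A}_1(y,1^n)=1]\ge \tfrac12+\tfrac1{p(n)}$ or $\Pr_{x}[\mathcal{A}_2(f(x),1^n)=b(x)=1]+\tfrac12\Pr_{y}[\mathcal{A}_2(y,1^n)=0]\ge \tfrac12+\tfrac1{p(n)}$ (uniform distributions). *)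

theory Defs
  imports Complex_Main
begin

text \<open>A circuit on input bits x_0..x_{k-1} is a list of gates. Wire i for i < k is input
bit i; the j-th gate produces wire k+j and may only refer to earlier wires (a reference
to a not-yet-defined wire reads as False, which makes the semantics total).\<close>

datatype gate = GConst bool | GNot nat | GAnd nat nat | GOr nat nat

record circuit =
  gates :: "gate list"
  outs :: "nat list"

definition wire :: "bool list \<Rightarrow> nat \<Rightarrow> bool" where
  "wire vs i = (if i < length vs then vs ! i else False)"

fun gate_val :: "bool list \<Rightarrow> gate \<Rightarrow> bool" where
  "gate_val vs (GConst b) = b"
| "gate_val vs (GNot i) = (\<not> wire vs i)"
| "gate_val vs (GAnd i j) = (wire vs i \<and> wire vs j)"
| "gate_val vs (GOr i j) = (wire vs i \<or> wire vs j)"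

fun run_gates :: "gate list \<Rightarrow> bool list \<Rightarrow> bool list" where
  "run_gates [] vs = vs"
| "run_gates (g # gs) vs = run_gates gs (vs @ [gate_val vs g])"

definition circ_eval :: "circuit \<Rightarrow> bool list \<Rightarrow> bool list" where
  "circ_eval C xs = map (wire (run_gates (gates C) xs)) (outs C)"

definition circ_eval1 :: "circuit \<Rightarrow> bool list \<Rightarrow> bool" where
  "circ_eval1 C xs = (case circ_eval C xs of [] \<Rightarrow> False | b # _ \<Rightarrow> b)"

definition circ_size :: "circuit \<Rightarrow> nat" where
  "circ_size C = length (gates C) + length (outs C)"

definition poly_bounded :: "(nat \<Rightarrow> nat) \<Rightarrow> bool" where
  "poly_bounded s \<longleftrightarrow> (\<exists>c d::nat. \<forall>n. s n \<le> c * n ^ d + c)"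

definition poly_size_family :: "(nat \<Rightarrow> circuit) \<Rightarrow> bool" where
  "poly_size_family C \<longleftrightarrow> poly_bounded (\<lambda>n. circ_size (C n))"

definition poly_circuit_fun :: "(bool list \<Rightarrow> bool list) \<Rightarrow> bool" where
  "poly_circuit_fun f \<longleftrightarrow> (\<exists>C. poly_size_family C \<and>
      (\<forall>x. circ_eval (C (length x)) x = f x))"

definition poly_circuit_pred :: "(bool list \<Rightarrow> bool) \<Rightarrow> bool" where
  "poly_circuit_pred b \<longleftrightarrow> (\<exists>C. poly_size_family C \<and>
      (\<forall>x. circ_eval1 (C (length x)) x = b x))"

definition ndet_out :: "circuit \<Rightarrow> nat \<Rightarrow> bool list \<Rightarrow> bool" where
  "ndet_out C k y \<longleftrightarrow> (\<exists>w. length w = k \<and> circ_eval1 C (y @ w))"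

definition condet_out :: "circuit \<Rightarrow> nat \<Rightarrow> bool list \<Rightarrow> bool" where
  "condet_out C k y \<longleftrightarrow> \<not> (\<exists>w. length w = k \<and> \<not> circ_eval1 C (y @ w))"

text \<open>A polynomial-size (co-)nondeterministic family: circuits A n (the n-th member,
playing the role of the auxiliary input 1^n) with witness lengths k n, both polynomially
bounded in n.\<close>
definition poly_ndet_family :: "(nat \<Rightarrow> circuit) \<Rightarrow> (nat \<Rightarrow> nat) \<Rightarrow> bool" where
  "poly_ndet_family A k \<longleftrightarrow> poly_size_family A \<and> poly_bounded k"

definition prob_bits :: "nat \<Rightarrow> (bool list \<Rightarrow> bool) \<Rightarrow> real" where
  "prob_bits n P = real (card {x::bool list. length x = n \<and> P x}) / 2 ^ n"

definition super_core ::
  "(bool list \<Rightarrow> bool) \<Rightarrow> (bool list \<Rightarrow> bool list) \<Rightarrow> (nat \<Rightarrow> nat) \<Rightarrow> bool" where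
  "super_core b f m \<longleftrightarrow> poly_circuit_pred b \<and>
     \<not> (\<exists>A1 k1 A2 k2 (p :: nat \<Rightarrow> nat).
          poly_ndet_family A1 k1 \<and> poly_ndet_family A2 k2 \<and>
          poly_bounded p \<and> (\<forall>n. p n > 0) \<and>
          infinite {n. prob_bits n (\<lambda>x. \<not> ndet_out (A1 n) (k1 n) (f x) \<and> \<not> b x)
                        + 1/2 * prob_bits (m n) (\<lambda>y. ndet_out (A1 n) (k1 n) y)
                        \<ge> 1/2 + 1 / real (p n)
                    \<or> prob_bits n (\<lambda>x. condet_out (A2 n) (k2 n) (f x) \<and> b x)
                        + 1/2 * prob_bits (m n) (\<lambda>y. \<not> condet_out (A2 n) (k2 n) y)
                        \<ge> 1/2 + 1 / real (p n)})"

end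

theory Submission
  imports Defs
begin

fun map_gate :: "(nat \<Rightarrow> nat) \<Rightarrow> gate \<Rightarrow> gate" where
  "map_gate s (GConst b) = GConst b"
| "map_gate s (GNot i) = GNot (s i)"
| "map_gate s (GAnd i j) = GAnd (s i) (s j)"
| "map_gate s (GOr i j) = GOr (s i) (s j)"

lemma length_run: "length (run_gates gs vs) = length vs + length gs"
  by (induction gs arbitrary: vs) auto

lemma run_append: "run_gates (gs1 @ gs2) vs = run_gates gs2 (run_gates gs1 vs)"
  by (induction gs1 arbitrary: vs) auto

lemma wire_app: "i < length vs \<Longrightarrow> wire (vs @ us) i = wire vs i"
  by (simp add: wire_def nth_append)

lemma run_prefix: "i < length vs \<Longrightarrow> wire (run_gates gs vs) i = wire vs i"
proof (induction gs arbitrary: vs)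
  case Nil then show ?case by simp
next
  case (Cons g gs)
  then show ?case by (simp add: wire_app)
qed

lemma run_last: "wire (run_gates (gs @ [g]) vs) (length vs + length gs) = gate_val (run_gates gs vs) g"
  by (simp add: run_append wire_def length_run nth_append)

definition sg :: "nat \<Rightarrow> nat \<Rightarrow> nat \<Rightarrow> nat \<Rightarrow> nat" where
  "sg a L n i = (if i < n then a + i else i + L - n)"

lemma gate_val_map: "(\<forall>i. wire vs (s i) = wire us i) \<Longrightarrow> gate_val vs (map_gate s g) = gate_val us g"
  by (cases g) auto

lemma allwire:
  assumes "length vs = length us + L - n" "n \<le> length us" "n \<le> L"
    "\<forall>i<length us. wire vs (sg a L n i) = wire us i"
  shows "\<forall>i. wire vs (sg a L n i) = wire us i"
proof
  fix i show "wire vs (sg a L n i) = wire us i"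
  proof (cases "i < length us")
    case True then show ?thesis using assms by auto
  next
    case False
    then have "sg a L n i \<ge> length vs" using assms(1,2) by (simp add: sg_def)
    then show ?thesis using False by (simp add: wire_def)
  qed
qed

lemma reloc:
  assumes "length vs = length us + L - n" "n \<le> length us" "n \<le> L" "a + n \<le> L"
    "\<forall>i<length us. wire vs (sg a L n i) = wire us i"
  shows "(\<forall>i. wire (run_gates (map (map_gate (sg a L n)) gs) vs) (sg a L n i) = wire (run_gates gs us) i)"
  using assms
proof (induction gs arbitrary: vs us)
  case Nil then show ?case using allwire[OF Nil.prems(1,2,3,5)] by simp
next
  case (Cons g gs)
  have aw: "\<forall>i. wire vs (sg a L n i) = wire us i" using allwire[OF Cons.prems(1,2,3,5)] .
  define v where "v = gate_val us g"
  have gv: "gate_val vs (map_gate (sg a L n) g) = v" using gate_val_map[OF aw] v_def by simp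
  have hv: "\<forall>i<length (us @ [v]). wire (vs @ [v]) (sg a L n i) = wire (us @ [v]) i"
  proof (intro allI impI)
    fix i assume i: "i < length (us @ [v])"
    show "wire (vs @ [v]) (sg a L n i) = wire (us @ [v]) i"
    proof (cases "i < length us")
      case True
      then have "sg a L n i < length vs" using Cons.prems(1,2,3,4) unfolding sg_def by (cases "i < n"; simp; linarith)
      then show ?thesis using True aw by (simp add: wire_app)
    next
      case False
      then have "i = length us" using i by simp
      moreover then have "sg a L n i = length vs" using Cons.prems(1,2) by (simp add: sg_def)
      ultimately show ?thesis by (simp add: wire_def)
    qed
  qed
  then have "\<forall>i. wire (run_gates (map (map_gate (sg a L n)) gs) (vs @ [v])) (sg a L n i) = wire (run_gates gs (us @ [v])) i"
    using Cons.IH[of "vs @ [v]" "us @ [v]", OF _ _ _ _ hv] Cons.prems(1-4) by simp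
  then show ?case using gv v_def by simp
qed

fun eqgates :: "nat \<Rightarrow> nat \<Rightarrow> (nat \<times> nat) list \<Rightarrow> gate list" where
  "eqgates L a [] = []"
| "eqgates L a ((i,j)#ps) = [GAnd i j, GOr i j, GNot (L+1), GOr L (L+2), GAnd a (L+3)] @ eqgates (L+5) (L+4) ps"

fun accidx :: "nat \<Rightarrow> nat \<Rightarrow> (nat \<times> nat) list \<Rightarrow> nat" where
  "accidx L a [] = a"
| "accidx L a (p#ps) = accidx (L+5) (L+4) ps"

lemma length_eqgates: "length (eqgates L a ps) = 5 * length ps"
  by (induction L a ps rule: eqgates.induct) auto

lemma eqgates_ok:
  "length vs = L \<Longrightarrow> a < L \<Longrightarrow> \<forall>(i,j)\<in>set ps. i < L \<and> j < L \<Longrightarrow>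
   wire (run_gates (eqgates L a ps) vs) (accidx L a ps) = (wire vs a \<and> (\<forall>(i,j)\<in>set ps. wire vs i = wire vs j))
   \<and> accidx L a ps < L + 5 * length ps"
proof (induction L a ps arbitrary: vs rule: eqgates.induct)
  case (1 L a) then show ?case by simp
next
  case (2 L a i j ps)
  define vs' where "vs' = run_gates [GAnd i j, GOr i j, GNot (L+1), GOr L (L+2), GAnd a (L+3)] vs"
  have lv: "length vs' = L + 5" using 2 by (simp add: vs'_def)
  have pre: "\<And>k. k < L \<Longrightarrow> wire vs' k = wire vs k" unfolding vs'_def by (rule run_prefix) (use 2(2) in simp)
  have acc: "wire vs' (L+4) = (wire vs a \<and> (wire vs i = wire vs j))"
    using 2 by (auto simp: vs'_def wire_def nth_append)
  have ih: "wire (run_gates (eqgates (L+5) (L+4) ps) vs') (accidx (L+5) (L+4) ps) = (wire vs' (L+4) \<and> (\<forall>(i,j)\<in>set ps. wire vs' i = wire vs' j))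
   \<and> accidx (L+5) (L+4) ps < L + 5 + 5 * length ps"
    using 2(1)[OF lv] 2(4) by fastforce
  have "(\<forall>(i,j)\<in>set ps. wire vs' i = wire vs' j) = (\<forall>(i,j)\<in>set ps. wire vs i = wire vs j)"
    using 2(4) pre by fastforce
  then show ?case using ih acc by (simp add: run_append vs'_def)
qed


definition clampf :: "circuit \<Rightarrow> nat \<Rightarrow> nat \<Rightarrow> nat \<Rightarrow> nat" where
  "clampf Cf n L2 ow = (if ow < n + length (gates Cf) then sg n (2*n) n ow else L2)"

definition bidx :: "circuit \<Rightarrow> circuit \<Rightarrow> nat \<Rightarrow> nat" where
  "bidx Cf Cb n = (let L2 = 2*n + length (gates Cf) + length (gates Cb) in
     (case outs Cb of [] \<Rightarrow> L2 | ow#_ \<Rightarrow> if ow < n + length (gates Cb) then sg n (2*n + length (gates Cf)) n ow else L2))"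

definition pairs :: "circuit \<Rightarrow> circuit \<Rightarrow> nat \<Rightarrow> (nat \<times> nat) list" where
  "pairs Cf Cb n = map (\<lambda>k. (k, clampf Cf n (2*n + length (gates Cf) + length (gates Cb)) (outs Cf ! k))) [0..<n]"

definition mkA :: "bool \<Rightarrow> circuit \<Rightarrow> circuit \<Rightarrow> nat \<Rightarrow> circuit" where
  "mkA pol Cf Cb n = (let L2 = 2*n + length (gates Cf) + length (gates Cb);
     bi = bidx Cf Cb n; ps = pairs Cf Cb n; acc = accidx (L2+2) (L2+1) ps in
     \<lparr>gates = map (map_gate (sg n (2*n) n)) (gates Cf)
             @ map (map_gate (sg n (2*n + length (gates Cf)) n)) (gates Cb)
             @ [GConst False, if pol then GAnd bi bi else GNot bi]
             @ eqgates (L2+2) (L2+1) ps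
             @ [if pol then GAnd acc acc else GNot acc],
      outs = [L2 + 2 + 5*n]\<rparr>)"

lemma mkA_size: "circ_size (mkA pol Cf Cb n) = circ_size Cf - length (outs Cf) + (circ_size Cb - length (outs Cb)) + 5*n + 4"
  by (simp add: mkA_def Let_def circ_size_def length_eqgates pairs_def)

lemma mkA_correct:
  assumes lo: "length (outs Cf) = n" and ly: "length y = n" and lw: "length w = n"
  shows "circ_eval1 (mkA pol Cf Cb n) (y @ w) =
    (if pol then circ_eval1 Cb w \<and> circ_eval Cf w = y else \<not> (\<not> circ_eval1 Cb w \<and> circ_eval Cf w = y))"
proof -
  define G1 where "G1 = length (gates Cf)"
  define G2 where "G2 = length (gates Cb)"
  define L2 where "L2 = 2*n + G1 + G2"
  define z where "z = y @ w"
  define s1 where "s1 = sg n (2*n) n"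
  define s2 where "s2 = sg n (2*n + G1) n"
  define uf where "uf = run_gates (gates Cf) w"
  define ub where "ub = run_gates (gates Cb) w"
  define vs1 where "vs1 = run_gates (map (map_gate s1) (gates Cf)) z"
  define vs2 where "vs2 = run_gates (map (map_gate s2) (gates Cb)) vs1"
  define bi where "bi = bidx Cf Cb n"
  define g0 where "g0 = (if pol then GAnd bi bi else GNot bi)"
  define vs3 where "vs3 = run_gates [GConst False, g0] vs2"
  define ps where "ps = pairs Cf Cb n"
  define acc where "acc = accidx (L2+2) (L2+1) ps"
  define vs4 where "vs4 = run_gates (eqgates (L2+2) (L2+1) ps) vs3"
  define fin where "fin = (if pol then GAnd acc acc else GNot acc)"
  have lz: "length z = 2*n" using ly lw z_def by simp
  have luf: "length uf = n + G1" using lw by (simp add: uf_def length_run G1_def)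
  have lub: "length ub = n + G2" using lw by (simp add: ub_def length_run G2_def)
  have lvs1: "length vs1 = 2*n + G1" using lz by (simp add: vs1_def length_run G1_def)
  have lvs2: "length vs2 = L2" using lvs1 by (simp add: vs2_def length_run G2_def L2_def)
  have lvs3: "length vs3 = L2 + 2" using lvs2 by (simp add: vs3_def)
  have lvs4: "length vs4 = L2 + 2 + 5*n" using lvs3 by (simp add: vs4_def length_run length_eqgates ps_def pairs_def)
  have zw: "\<And>i. i < n \<Longrightarrow> wire z (n + i) = wire w i"
    using ly lw by (simp add: z_def wire_def nth_append)
  have R1: "\<forall>i. wire vs1 (s1 i) = wire uf i"
    unfolding vs1_def uf_def s1_def
    by (rule reloc) (use lz lw zw in \<open>auto simp: sg_def\<close>)
  have R2: "\<forall>i. wire vs2 (s2 i) = wire ub i"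
    unfolding vs2_def ub_def s2_def
  proof (rule reloc)
    show "\<forall>i<length w. wire vs1 (sg n (2 * n + G1) n i) = wire w i"
    proof (intro allI impI)
      fix i assume "i < length w"
      then have "n + i < length z" "i < n" using lz lw by auto
      then show "wire vs1 (sg n (2 * n + G1) n i) = wire w i"
        using run_prefix[of "n+i" z] zw by (simp add: sg_def vs1_def)
    qed
  qed (use lvs1 lw in auto)
  have v3a: "\<And>k. k < L2 \<Longrightarrow> wire vs3 k = wire vs2 k"
    unfolding vs3_def by (rule run_prefix) (simp add: lvs2)
  have v3F: "wire vs3 L2 = False" using lvs2 by (simp add: vs3_def wire_def nth_append)
  have v2F: "wire (vs2 @ [False]) L2 = False" using lvs2 by (simp add: wire_def nth_append)
  have v2a: "\<And>k. k < L2 \<Longrightarrow> wire (vs2 @ [False]) k = wire vs2 k" using lvs2 by (simp add: wire_app)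
  have bi_ok: "wire (vs2 @ [False]) bi = circ_eval1 Cb w \<and> bi \<le> L2"
  proof (cases "outs Cb")
    case Nil
    then show ?thesis using v2F by (simp add: bi_def bidx_def circ_eval1_def circ_eval_def L2_def G1_def G2_def)
  next
    case (Cons ow os)
    show ?thesis
    proof (cases "ow < n + G2")
      case True
      have "s2 ow < L2" using True by (simp add: s2_def sg_def L2_def)
      moreover have "bi = s2 ow" using Cons True by (simp add: bi_def bidx_def s2_def G1_def G2_def)
      ultimately show ?thesis using R2 v2a Cons by (simp add: circ_eval1_def circ_eval_def ub_def)
    next
      case False
      then have "wire ub ow = False" using lub by (simp add: wire_def)
      moreover have "bi = L2" using Cons False by (simp add: bi_def bidx_def L2_def G1_def G2_def)
      ultimately show ?thesis using v2F Cons by (simp add: circ_eval1_def circ_eval_def ub_def)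
    qed
  qed
  have g0v: "wire vs3 (L2+1) = (if pol then circ_eval1 Cb w else \<not> circ_eval1 Cb w)"
  proof -
    have "wire vs3 (L2+1) = gate_val (vs2 @ [False]) g0"
      using lvs2 by (simp add: vs3_def wire_def nth_append)
    then show ?thesis using bi_ok by (simp add: g0_def)
  qed
  have cl: "\<And>ow. wire vs3 (clampf Cf n L2 ow) = wire uf ow \<and> clampf Cf n L2 ow \<le> L2"
  proof -
    fix ow show "wire vs3 (clampf Cf n L2 ow) = wire uf ow \<and> clampf Cf n L2 ow \<le> L2"
    proof (cases "ow < n + G1")
      case True
      have lt: "s1 ow < 2*n + G1" using True by (simp add: s1_def sg_def)
      then have "wire vs3 (s1 ow) = wire vs1 (s1 ow)"
        using v3a[of "s1 ow"] run_prefix[of "s1 ow" vs1] lvs1 by (simp add: L2_def vs2_def)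
      then show ?thesis using True R1 lt by (simp add: clampf_def s1_def G1_def L2_def)
    next
      case False
      then show ?thesis using v3F luf by (simp add: clampf_def G1_def wire_def)
    qed
  qed
  have ps_eq: "ps = map (\<lambda>k. (k, clampf Cf n L2 (outs Cf ! k))) [0..<n]"
    by (simp add: ps_def pairs_def L2_def G1_def G2_def)
  have psb: "\<forall>(i,j)\<in>set ps. i < L2+2 \<and> j < L2+2"
  proof (intro ballI, clarify)
    fix i j assume "(i, j) \<in> set ps"
    then have "i < n" "j = clampf Cf n L2 (outs Cf ! i)" unfolding ps_eq by auto
    moreover have "n \<le> L2" by (simp add: L2_def)
    ultimately show "i < L2+2 \<and> j < L2+2" using cl[of "outs Cf ! i"] by simp
  qed
  have EQ: "wire vs4 acc = (wire vs3 (L2+1) \<and> (\<forall>(i,j)\<in>set ps. wire vs3 i = wire vs3 j)) \<and> acc < L2 + 2 + 5*n"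
    using eqgates_ok[OF lvs3 _ psb, of "L2+1"] by (simp add: vs4_def acc_def ps_def pairs_def)
  have yk: "\<And>k. k < n \<Longrightarrow> wire vs3 k = y ! k"
  proof -
    fix k assume k: "k < n"
    have "wire vs3 k = wire vs2 k" using k by (intro v3a) (simp add: L2_def)
    also have "\<dots> = wire vs1 k" unfolding vs2_def using k lvs1 by (intro run_prefix) simp
    also have "\<dots> = wire z k" unfolding vs1_def using k lz by (intro run_prefix) simp
    also have "\<dots> = y ! k" using k ly by (simp add: z_def wire_def nth_append)
    finally show "wire vs3 k = y ! k" .
  qed
  have fk: "\<And>k. k < n \<Longrightarrow> wire vs3 (clampf Cf n L2 (outs Cf ! k)) = circ_eval Cf w ! k"
    using cl lo by (simp add: circ_eval_def uf_def)
  have allp: "(\<forall>(i,j)\<in>set ps. wire vs3 i = wire vs3 j) = (circ_eval Cf w = y)"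
  proof -
    have "(\<forall>(i,j)\<in>set ps. wire vs3 i = wire vs3 j) = (\<forall>k<n. y ! k = circ_eval Cf w ! k)"
      using yk fk unfolding ps_eq by auto
    also have "\<dots> = (circ_eval Cf w = y)"
      using lo ly by (auto simp: list_eq_iff_nth_eq circ_eval_def)
    finally show ?thesis .
  qed
  have mk: "mkA pol Cf Cb n = \<lparr>gates = map (map_gate s1) (gates Cf) @ map (map_gate s2) (gates Cb)
       @ [GConst False, g0] @ eqgates (L2+2) (L2+1) ps @ [fin], outs = [L2 + 2 + 5*n]\<rparr>"
    by (simp add: mkA_def Let_def s1_def s2_def G1_def G2_def L2_def g0_def bi_def ps_def fin_def acc_def)
  have run: "run_gates (gates (mkA pol Cf Cb n)) (y @ w) = vs4 @ [gate_val vs4 fin]"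
    by (simp add: mk run_append vs4_def vs3_def vs2_def vs1_def z_def)
  have "circ_eval1 (mkA pol Cf Cb n) (y @ w) = gate_val vs4 fin"
  proof -
    have ou: "outs (mkA pol Cf Cb n) = [L2 + 2 + 5*n]" by (simp add: mk)
    show ?thesis unfolding circ_eval1_def circ_eval_def ou run
      by (simp add: wire_def nth_append lvs4)
  qed
  also have "\<dots> = (if pol then wire vs4 acc else \<not> wire vs4 acc)"
    by (simp add: fin_def)
  finally show ?thesis using EQ g0v allp by auto
qed


lemma pb_mono: "(\<And>n. s n \<le> t n) \<Longrightarrow> poly_bounded t \<Longrightarrow> poly_bounded s"
  unfolding poly_bounded_def by (meson le_trans)

lemma pw_le: "(d::nat) \<le> D \<Longrightarrow> (n::nat) ^ d \<le> n ^ D + 1"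
proof (cases "n = 0")
  case True then show ?thesis by (cases d) auto
next
  case False
  assume "d \<le> D"
  then have "n ^ d \<le> n ^ D" using False by (intro power_increasing) auto
  then show ?thesis by simp
qed

lemma pb_add:
  fixes s t :: "nat \<Rightarrow> nat"
  assumes "poly_bounded s" "poly_bounded t" shows "poly_bounded (\<lambda>n. s n + t n)"
proof -
  obtain c1 d1 :: nat where h1: "\<forall>n. s n \<le> c1 * n ^ d1 + c1" using assms(1) poly_bounded_def by auto
  obtain c2 d2 :: nat where h2: "\<forall>n. t n \<le> c2 * n ^ d2 + c2" using assms(2) poly_bounded_def by auto
  have "\<forall>n. s n + t n \<le> (2*(c1+c2)) * n ^ (d1+d2) + 2*(c1+c2)"
  proof
    fix n :: nat
    have a: "n ^ d1 \<le> n ^ (d1+d2) + 1" by (rule pw_le) simp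
    have b: "n ^ d2 \<le> n ^ (d1+d2) + 1" by (rule pw_le) simp
    have "c1 * n ^ d1 \<le> c1 * (n ^ (d1+d2) + 1)" using a by (rule mult_le_mono2)
    moreover have "c2 * n ^ d2 \<le> c2 * (n ^ (d1+d2) + 1)" using b by (rule mult_le_mono2)
    moreover have "s n \<le> c1 * n ^ d1 + c1" "t n \<le> c2 * n ^ d2 + c2" using h1 h2 by auto
    ultimately show "s n + t n \<le> (2*(c1+c2)) * n ^ (d1+d2) + 2*(c1+c2)"
      by (simp add: algebra_simps)
  qed
  then show ?thesis unfolding poly_bounded_def by blast
qed

lemma pb_lin: "poly_bounded (\<lambda>n. c * n + d)"
  unfolding poly_bounded_def by (rule exI[of _ "c+d"], rule exI[of _ 1]) (simp add: algebra_simps)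

lemma prob_cong: "(\<And>x. length x = n \<Longrightarrow> P x = Q x) \<Longrightarrow> prob_bits n P = prob_bits n Q"
  unfolding prob_bits_def by (metis (mono_tags, lifting) Collect_cong)

lemma card_S: "card {x::bool list. length x = n} = 2 ^ n"
  using card_lists_length_eq[of "UNIV::bool set" n] by simp

lemma fin_S: "finite {x::bool list. length x = n}"
  using finite_lists_length_eq[of "UNIV::bool set" n] by simp

lemma prob_core:
  fixes f :: "bool list \<Rightarrow> bool list" and b :: "bool list \<Rightarrow> bool"
  assumes inj: "inj_on f {x. length x = n}" and lenf: "\<forall>x. length (f x) = length x"
  shows "(prob_bits n (\<lambda>x. \<not>(\<exists>w. length w = n \<and> b w \<and> f w = f x) \<and> \<not> b x)
          + 1/2 * prob_bits n (\<lambda>y. \<exists>w. length w = n \<and> b w \<and> f w = y))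
       + (prob_bits n (\<lambda>x. \<not>(\<exists>w. length w = n \<and> \<not> b w \<and> f w = f x) \<and> b x)
          + 1/2 * prob_bits n (\<lambda>y. \<exists>w. length w = n \<and> \<not> b w \<and> f w = y)) = 3/2"
proof -
  define B1 where "B1 = {x::bool list. length x = n \<and> b x}"
  define B0 where "B0 = {x::bool list. length x = n \<and> \<not> b x}"
  have fB1: "finite B1" "finite B0" using fin_S unfolding B1_def B0_def by (auto intro: finite_subset)
  have un: "B1 \<union> B0 = {x. length x = n}" "B1 \<inter> B0 = {}" unfolding B1_def B0_def by auto
  have cs: "card B1 + card B0 = 2 ^ n"
    using card_Un_disjoint[OF fB1 un(2)] un(1) card_S by simp
  have injf: "\<And>w x. length w = n \<Longrightarrow> length x = n \<Longrightarrow> f w = f x \<Longrightarrow> w = x"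
    using inj unfolding inj_on_def by auto
  have e1: "{x. length x = n \<and> \<not>(\<exists>w. length w = n \<and> b w \<and> f w = f x) \<and> \<not> b x} = B0"
    unfolding B0_def using injf by blast
  have e2: "{x. length x = n \<and> \<not>(\<exists>w. length w = n \<and> \<not> b w \<and> f w = f x) \<and> b x} = B1"
    unfolding B1_def using injf by blast
  have e3: "{y. length y = n \<and> (\<exists>w. length w = n \<and> b w \<and> f w = y)} = f ` B1"
    unfolding B1_def using lenf by auto
  have e4: "{y. length y = n \<and> (\<exists>w. length w = n \<and> \<not> b w \<and> f w = y)} = f ` B0"
    unfolding B0_def using lenf by auto
  have c3: "card (f ` B1) = card B1" by (rule card_image, rule inj_on_subset[OF inj]) (auto simp: B1_def)
  have c4: "card (f ` B0) = card B0" by (rule card_image, rule inj_on_subset[OF inj]) (auto simp: B0_def)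
  have "(2::real) ^ n > 0" by simp
  have cs': "real (card B1) + real (card B0) = 2 ^ n" using cs by (metis of_nat_add of_nat_numeral of_nat_power)
  have "real (card B0)/2^n + 1/2*(real (card B1)/2^n) + (real (card B1)/2^n + 1/2*(real (card B0)/2^n))
      = 3/2 * ((real (card B1) + real (card B0))/2^n)" by (simp add: field_simps)
  also have "\<dots> = 3/2" using cs' by simp
  finally show ?thesis unfolding prob_bits_def e1 e2 e3 e4 c3 c4 .
qed

theorem corollary6p8:
  fixes f :: "bool list \<Rightarrow> bool list"
  assumes "poly_circuit_fun f"
    and "\<forall>x. length (f x) = length x"
    and "infinite {n. inj_on f {x. length x = n}}"
  shows "\<not> (\<exists>b. super_core b f (\<lambda>n. n))"
proof
  assume "\<exists>b. super_core b f (\<lambda>n. n)"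
  then obtain b where sc: "super_core b f (\<lambda>n. n)" by blast
  then obtain CB where CB: "poly_size_family CB" "\<forall>x. circ_eval1 (CB (length x)) x = b x"
    unfolding super_core_def poly_circuit_pred_def by blast
  obtain CF where CF: "poly_size_family CF" "\<forall>x. circ_eval (CF (length x)) x = f x"
    using assms(1) unfolding poly_circuit_fun_def by blast
  have lo: "\<And>n. length (outs (CF n)) = n"
  proof -
    fix n
    have "length (circ_eval (CF n) (replicate n False)) = n"
      using CF(2)[rule_format, of "replicate n False"] assms(2) by simp
    then show "length (outs (CF n)) = n" by (simp add: circ_eval_def)
  qed
  define A1 where "A1 = (\<lambda>n. mkA True (CF n) (CB n) n)"
  define A2 where "A2 = (\<lambda>n. mkA False (CF n) (CB n) n)"
  define k :: "nat \<Rightarrow> nat" where "k = (\<lambda>n. n)"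
  define p :: "nat \<Rightarrow> nat" where "p = (\<lambda>n. 4)"
  have pbk: "poly_bounded k" using pb_lin[of 1 0] by (simp add: k_def)
  have pbp: "poly_bounded p" using pb_lin[of 0 4] by (simp add: p_def)
  have psz: "poly_size_family (\<lambda>n. mkA pol (CF n) (CB n) n)" for pol
  proof -
    have "poly_bounded (\<lambda>n. (circ_size (CF n) + circ_size (CB n)) + (5 * n + 4))"
      by (intro pb_add pb_lin) (use CF(1) CB(1) in \<open>simp_all add: poly_size_family_def\<close>)
    then show ?thesis unfolding poly_size_family_def
      by (rule pb_mono[rotated]) (simp add: mkA_size)
  qed
  have fam1: "poly_ndet_family A1 k" using psz pbk by (simp add: poly_ndet_family_def A1_def)
  have fam2: "poly_ndet_family A2 k" using psz pbk by (simp add: poly_ndet_family_def A2_def)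
  have n1: "ndet_out (A1 n) (k n) y = (\<exists>w. length w = n \<and> b w \<and> f w = y)" if "length y = n" for n y
    unfolding ndet_out_def A1_def k_def using mkA_correct[OF lo that] CB(2) CF(2) by auto
  have n2: "condet_out (A2 n) (k n) y = (\<not> (\<exists>w. length w = n \<and> \<not> b w \<and> f w = y))" if "length y = n" for n y
    unfolding condet_out_def A2_def k_def using mkA_correct[OF lo that] CB(2) CF(2) by auto
  define E where "E = {n. prob_bits n (\<lambda>x. \<not> ndet_out (A1 n) (k n) (f x) \<and> \<not> b x)
                        + 1/2 * prob_bits n (\<lambda>y. ndet_out (A1 n) (k n) y)
                        \<ge> 1/2 + 1 / real (p n)
                    \<or> prob_bits n (\<lambda>x. condet_out (A2 n) (k n) (f x) \<and> b x)
                        + 1/2 * prob_bits n (\<lambda>y. \<not> condet_out (A2 n) (k n) y)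
                        \<ge> 1/2 + 1 / real (p n)}"
  have sub: "{n. inj_on f {x. length x = n}} \<subseteq> E"
  proof
    fix n assume "n \<in> {n. inj_on f {x. length x = n}}"
    then have inj: "inj_on f {x. length x = n}" by simp
    have q1: "prob_bits n (\<lambda>x. \<not> ndet_out (A1 n) (k n) (f x) \<and> \<not> b x) =
        prob_bits n (\<lambda>x. \<not>(\<exists>w. length w = n \<and> b w \<and> f w = f x) \<and> \<not> b x)"
      by (rule prob_cong) (simp add: n1 assms(2))
    have q2: "prob_bits n (\<lambda>y. ndet_out (A1 n) (k n) y) = prob_bits n (\<lambda>y. \<exists>w. length w = n \<and> b w \<and> f w = y)"
      by (rule prob_cong) (simp add: n1)
    have q3: "prob_bits n (\<lambda>x. condet_out (A2 n) (k n) (f x) \<and> b x) =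
        prob_bits n (\<lambda>x. \<not>(\<exists>w. length w = n \<and> \<not> b w \<and> f w = f x) \<and> b x)"
      by (rule prob_cong) (simp add: n2 assms(2))
    have q4: "prob_bits n (\<lambda>y. \<not> condet_out (A2 n) (k n) y) = prob_bits n (\<lambda>y. \<exists>w. length w = n \<and> \<not> b w \<and> f w = y)"
      by (rule prob_cong) (simp add: n2)
    have "1 / real (p n) = 1/4" by (simp add: p_def)
    then show "n \<in> E" using prob_core[OF inj assms(2), of b] unfolding E_def mem_Collect_eq q1 q2 q3 q4
      by simp linarith
  qed
  have "infinite E" using sub assms(3) infinite_super by blast
  moreover have "\<forall>n. p n > 0" by (simp add: p_def)
  ultimately show False using sc fam1 fam2 pbp unfolding super_core_def E_def by blast
qed

end
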